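(* Let $(Q,\cdot)$ and $(Q,\ast)$ be right modular magmas on the same set $Q$, where $(Q,\cdot)$ has a left unit $e$ and $(Q,\ast)$ has a left unit $\overline{e}$. Then $(Q,\cdot,\ast)$ is a double magma, i.e. $(x\cdot y)\ast(z\cdot w)=(x\ast z)\cdot(y\ast w)$ for all $x,y,z,w\in Q$, if and only if there is an involutive automorphism $\alpha$ of $(Q,\ast)$ such that $x\ast y=\alpha x\cdot y$ for all $x,y\in Q$. In this case $\alpha x=(x\ast\overline{e})\cdot\overline{e}=(x\cdot\overline{e})\ast\overline{e}$ for all $x\in Q$.
   Context: A magma $(Q,\cdot)$ is right modular if $(xy)z=(zy)x$ for all $x,y,z\in Q$. An element $l$ is a left unit of a magma if $lx=x$ for all $x$. A mapping $\alpha:Q\to Q$ is involutive if $\alpha\circ\alpha$ is the identity map of $Q$. *)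

theory Defs
  imports Main
begin

definition right_modular :: "('a \<Rightarrow> 'a \<Rightarrow> 'a) \<Rightarrow> bool" where
  "right_modular m \<longleftrightarrow> (\<forall>x y z. m (m x y) z = m (m z y) x)"

definition left_unit :: "('a \<Rightarrow> 'a \<Rightarrow> 'a) \<Rightarrow> 'a \<Rightarrow> bool" where
  "left_unit m l \<longleftrightarrow> (\<forall>x. m l x = x)"

definition involutive :: "('a \<Rightarrow> 'a) \<Rightarrow> bool" where
  "involutive f \<longleftrightarrow> f \<circ> f = id"

definition magma_automorphism :: "('a \<Rightarrow> 'a \<Rightarrow> 'a) \<Rightarrow> ('a \<Rightarrow> 'a) \<Rightarrow> bool" where
  "magma_automorphism m f \<longleftrightarrow> bij f \<and> (\<forall>x y. f (m x y) = m (f x) (f y))"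

definition double_magma :: "('a \<Rightarrow> 'a \<Rightarrow> 'a) \<Rightarrow> ('a \<Rightarrow> 'a \<Rightarrow> 'a) \<Rightarrow> bool" where
  "double_magma dot ast \<longleftrightarrow>
     (\<forall>x y z w. ast (dot x y) (dot z w) = dot (ast x z) (ast y w))"

end

theory Submission
  imports Defs
begin

lemma rm_basic:
  assumes "right_modular m" "left_unit m u"
  shows rm_R: "\<And>x z. m (m z x) u = m x z"
    and rm_RR: "\<And>x. m (m x u) u = x"
    and rm_L: "\<And>a b c. m a (m b c) = m b (m a c)"
    and rm_med: "\<And>a b c d. m (m a b) (m c d) = m (m a c) (m b d)"
    and rm_uniq: "\<And>v. left_unit m v \<Longrightarrow> v = u"
proof -
  have M: "\<And>x y z. m (m x y) z = m (m z y) x" using assms(1) unfolding right_modular_def by blast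
  have U: "\<And>x. m u x = x" using assms(2) unfolding left_unit_def by blast
  show R: "\<And>x z. m (m z x) u = m x z" by (metis M U)
  show "\<And>x. m (m x u) u = x" by (metis R U)
  show "\<And>a b c. m a (m b c) = m b (m a c)" by (metis R M)
  show "\<And>a b c d. m (m a b) (m c d) = m (m a c) (m b d)" by (metis M)
  show "\<And>v. left_unit m v \<Longrightarrow> v = u"
  proof -
    fix v assume "left_unit m v"
    then have V: "\<And>x. m v x = x" unfolding left_unit_def by blast
    have "v = m (m v u) u" using R U by metis
    also have "\<dots> = u" using V U by simp
    finally show "v = u" .
  qed
qed

theorem theorem5p1:
  fixes dot :: "'a \<Rightarrow> 'a \<Rightarrow> 'a" and ast :: "'a \<Rightarrow> 'a \<Rightarrow> 'a" and e eb :: 'a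
  assumes "right_modular dot" and "right_modular ast"
    and "left_unit dot e" and "left_unit ast eb"
  shows "(double_magma dot ast \<longleftrightarrow>
            (\<exists>\<alpha>. magma_automorphism ast \<alpha> \<and> involutive \<alpha> \<and>
                 (\<forall>x y. ast x y = dot (\<alpha> x) y)))
         \<and> (\<forall>\<alpha>. magma_automorphism ast \<alpha> \<and> involutive \<alpha> \<and>
                 (\<forall>x y. ast x y = dot (\<alpha> x) y) \<longrightarrow>
               (\<forall>x. \<alpha> x = dot (ast x eb) eb \<and> \<alpha> x = ast (dot x eb) eb))"
proof -
  note D = rm_basic[OF assms(1,3)]
  note A = rm_basic[OF assms(2,4)]
  have Ue: "\<And>x. dot e x = x" using assms(3) unfolding left_unit_def by blast
  have Ueb: "\<And>x. ast eb x = x" using assms(4) unfolding left_unit_def by blast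
  have bwd: "double_magma dot ast"
    if aut: "magma_automorphism ast \<alpha>" and inv: "involutive \<alpha>"
      and rel: "\<forall>x y. ast x y = dot (\<alpha> x) y" for \<alpha>
  proof -
    have ii: "\<And>x. \<alpha> (\<alpha> x) = x" using inv unfolding involutive_def by (metis comp_apply id_apply)
    have h: "\<And>x y. \<alpha> (ast x y) = ast (\<alpha> x) (\<alpha> y)" using aut unfolding magma_automorphism_def by blast
    have dd: "\<And>x y. dot x y = ast (\<alpha> x) y" using rel ii by metis
    have a2: "\<And>x y. \<alpha> (dot x y) = dot (\<alpha> x) (\<alpha> y)"
      using dd h ii rel by metis
    show ?thesis unfolding double_magma_def
    proof (intro allI)
      fix x y z w
      have "ast (dot x y) (dot z w) = dot (dot (\<alpha> x) (\<alpha> y)) (dot z w)" using rel a2 by metis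
      also have "\<dots> = dot (dot (\<alpha> x) z) (dot (\<alpha> y) w)" using D(4) by metis
      also have "\<dots> = dot (ast x z) (ast y w)" using rel by metis
      finally show "ast (dot x y) (dot z w) = dot (ast x z) (ast y w)" .
    qed
  qed
  have fwd_e: "eb = e" if dm: "double_magma dot ast"
  proof -
    have I: "\<And>x y z w. ast (dot x y) (dot z w) = dot (ast x z) (ast y w)"
      using dm unfolding double_magma_def by blast
    have "left_unit dot (ast e e)" unfolding left_unit_def
    proof
      fix x
      have "ast (dot e eb) (dot e x) = dot (ast e e) (ast eb x)" by (rule I)
      then show "dot (ast e e) x = x" using Ue Ueb by simp
    qed
    then have ee: "ast e e = e" using D(5) by blast
    have c1: "\<And>z w. dot (ast e z) w = dot z w"
    proof -
      fix z w
      have "ast (dot e eb) (dot z w) = dot (ast e z) (ast eb w)" by (rule I)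
      then show "dot (ast e z) w = dot z w" using Ue Ueb by simp
    qed
    have c2: "\<And>z. ast e z = z"
    proof -
      fix z
      have "ast e z = dot e (ast e z)" using Ue by simp
      also have "\<dots> = dot (dot (ast e z) e) e" using D(1) by metis
      also have "\<dots> = dot (dot z e) e" using c1 by simp
      also have "\<dots> = z" using D(2) by simp
      finally show "ast e z = z" .
    qed
    show ?thesis using A(5)[of e] c2 unfolding left_unit_def by metis
  qed
  have fwd: "\<exists>\<alpha>. magma_automorphism ast \<alpha> \<and> involutive \<alpha> \<and> (\<forall>x y. ast x y = dot (\<alpha> x) y)"
    if dm: "double_magma dot ast"
  proof -
    have I: "\<And>x y z w. ast (dot x y) (dot z w) = dot (ast x z) (ast y w)"
      using dm unfolding double_magma_def by blast
    have E: "eb = e" using fwd_e dm by blast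
    have Ue2: "\<And>x. ast e x = x" using Ueb E by simp
    define \<alpha> where "\<alpha> x = ast (dot x e) e" for x
    have r1: "\<And>x w. ast (dot x e) w = dot (ast x e) w"
    proof -
      fix x w
      have "ast (dot x e) (dot e w) = dot (ast x e) (ast e w)" by (rule I)
      then show "ast (dot x e) w = dot (ast x e) w" using Ue Ue2 by simp
    qed
    have rel: "\<And>x w. ast x w = dot (\<alpha> x) w"
      unfolding \<alpha>_def using r1 D(2) by metis
    have ae: "\<And>x. ast (\<alpha> x) e = dot x e"
      unfolding \<alpha>_def using A(2) E by metis
    have ii: "\<And>x. \<alpha> (\<alpha> x) = x"
    proof -
      fix x
      have "\<alpha> (\<alpha> x) = dot (ast (\<alpha> x) e) e" using rel D(2) by metis
      also have "\<dots> = x" using ae D(2) by simp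
      finally show "\<alpha> (\<alpha> x) = x" .
    qed
    have inv: "involutive \<alpha>" unfolding involutive_def using ii by auto
    have hom: "\<And>x y. \<alpha> (ast x y) = ast (\<alpha> x) (\<alpha> y)"
    proof -
      fix x y
      have "\<alpha> (ast x y) = dot (ast (ast x y) e) e" using rel D(2) by metis
      also have "ast (ast x y) e = dot (ast (\<alpha> x) e) (ast y e)"
        using I[of "\<alpha> x" y e e] rel ii Ue by metis
      also have "dot (dot (ast (\<alpha> x) e) (ast y e)) e = dot (ast y e) (ast (\<alpha> x) e)"
        using D(1) by metis
      also have "\<dots> = dot (ast y e) (dot x e)" using ae by simp
      also have "\<dots> = dot x (dot (ast y e) e)" using D(3) by metis
      also have "\<dots> = dot x (\<alpha> y)" using rel D(2) by metis
      also have "\<dots> = ast (\<alpha> x) (\<alpha> y)" using rel ii by metis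
      finally show "\<alpha> (ast x y) = ast (\<alpha> x) (\<alpha> y)" .
    qed
    have "bij \<alpha>" using ii by (metis bij_betw_imageI inj_def surj_def)
    then have "magma_automorphism ast \<alpha>" unfolding magma_automorphism_def using hom by blast
    then show ?thesis using inv rel by blast
  qed
  have part2: "\<forall>x. \<alpha> x = dot (ast x eb) eb \<and> \<alpha> x = ast (dot x eb) eb"
    if aut: "magma_automorphism ast \<alpha>" and inv: "involutive \<alpha>"
      and rel: "\<forall>x y. ast x y = dot (\<alpha> x) y" for \<alpha>
  proof -
    have E: "eb = e" using fwd_e bwd[OF that] by blast
    have ii: "\<And>x. \<alpha> (\<alpha> x) = x" using inv unfolding involutive_def by (metis comp_apply id_apply)
    have h: "\<And>x y. \<alpha> (ast x y) = ast (\<alpha> x) (\<alpha> y)" using aut unfolding magma_automorphism_def by blast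
    have ae: "\<alpha> e = e" using rel Ueb E D(5) unfolding left_unit_def by metis
    have dd: "\<And>x y. dot x y = ast (\<alpha> x) y" using rel ii by metis
    show ?thesis
    proof
      fix x
      have 1: "\<alpha> x = dot (ast x e) e" using rel D(2) by metis
      have "\<alpha> (dot x e) = dot (\<alpha> x) e" using dd h ii ae rel by metis
      then have 2: "\<alpha> x = ast (dot x e) e" using rel D(2) by metis
      show "\<alpha> x = dot (ast x eb) eb \<and> \<alpha> x = ast (dot x eb) eb" using 1 2 E by simp
    qed
  qed
  show ?thesis using bwd fwd part2 by blast
qed

end
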